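(* For any $\rho$, any value $h_\rho$ of $H_\rho(X)$, and any $\sigma_\varepsilon^2$, the plausibility function satisfies \[ P_{X|\rho, \sigma_\varepsilon^2}\bigl\{ \mathrm{pl}_{X|h_\rho, \rho}(\rho) \leq \alpha \mid H_\rho(X)=h_\rho \bigr\} = \alpha, \quad \forall \; \alpha \in (0,1). \]
   Context: Consider the linear mixed model $Y = X\beta + Z\alpha + \varepsilon$ with $\alpha \sim N_a(0,\sigma_\alpha^2 A)$, $\varepsilon \sim N_n(0,\sigma_\varepsilon^2 I_n)$ independent, $A$ known, $X$ of rank $p<n$. Let $K$ be $n\times(n-p)$ with $KK^\top = I_n - X(X^\top X)^{-1}X^\top$, $K^\top K = I_{n-p}$, and $G = K^\top Z A Z^\top K$ with distinct eigenvalues $\lambda_1 > \cdots > \lambda_L \geq 0$ of multiplicities $r_1,\ldots,r_L$ (assume $L\ge 3$). With $P=[P_1,\ldots,P_L]$ orthogonal diagonalizing $G$, let $S_\ell = Y^\top K P_\ell P_\ell^\top K^\top Y$, so that $S_\ell = (\lambda_\ell\sigma_\alpha^2+\sigma_\varepsilon^2)V_\ell$ with $V_\ell \sim \chi^2(r_\ell)$ independent. The heritability coefficient is $\rho = \sigma_\alpha^2/(\sigma_\alpha^2+\sigma_\varepsilon^2)$. Define $X_\ell = (S_\ell/r_\ell)/(S_L/r_L)$ and $U_\ell = (V_\ell/r_\ell)/(V_L/r_L)$ for $\ell=1,\ldots,L-1$, and $f_\ell(\rho) = \{1+\rho(\lambda_\ell-1)\}/\{1+\rho(\lambda_L-1)\}$,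 so that $X_\ell = f_\ell(\rho)U_\ell$. Let $g(\rho) = (\partial_\rho \log f_1(\rho),\ldots,\partial_\rho\log f_{L-1}(\rho))^\top$ and let $M_\rho$ be an $(L-2)\times(L-1)$ matrix whose rows form a basis of the orthogonal complement of $g(\rho)$. Define $\tau(u)=\sum_{\ell=1}^{L-1}\log u_\ell$, $\eta_\rho(u) = M_\rho(\log u_1,\ldots,\log u_{L-1})^\top$, $T(x)=\sum_{\ell=1}^{L-1}\log x_\ell$, $H_\rho(x) = M_\rho(\log\{x_1/f_1(\rho)\},\ldots,\log\{x_{L-1}/f_{L-1}(\rho)\})^\top$, and $\phi(\rho)=\sum_{\ell=1}^{L-1}\log f_\ell(\rho)$. This gives the conditional association $T(X) = \phi(\rho) + V$, where $V \sim P_{V|h_\rho,\rho}$, the conditional distribution of $\tau(U)$ given $\eta_\rho(U) = h_\rho$, the observed value of $H_\rho(X)$. Use the default predictive random set $\mathcal{S} = \{v : |v-\mu_\rho| \le |V-\mu_\rho|\}$ with $V\sim P_{V|h_\rho,\rho}$ and $\mu_\rho$ the mean of $P_{V|h_\rho,\rho}$. Let $F_{h_\rho,\rho}$ be the distribution function of $|V-\mu_\rho|$ for $V \sim P_{V|h_\rho,\rho}$. The plausibility function is $\mathrm{pl}_{x|h_\rho,\rho}(\rho) = 1 - F_{h_\rho,\rho}(|T(x)-\phi(\rho)-\mu_\rho|)$. $P_{X|\rho,\sigma_\varepsilon^2}$ denotes the sampling distribution of $X=(X_1,\ldots,X_{L-1})$ under $(\rho,\sigma_\varepsilon^2)$.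 *)

theory Defs
  imports "HOL-Probability.Probability"
begin

text \<open>Indices are 0-based: the paper's \<open>\<ell> = 1..L\<close> becomes \<open>l = 0..L-1\<close>, the
  last index \<open>L\<close> becomes \<open>L - 1\<close>; vectors of length \<open>L-1\<close> / \<open>L-2\<close> are functions
  \<open>nat \<Rightarrow> real\<close> used on \<open>{..<L-1}\<close> / \<open>{..<L-2}\<close>.\<close>

definition chi2_density :: "nat \<Rightarrow> real \<Rightarrow> real" where
  "chi2_density r x =
     (if x > 0 then x powr (real r / 2 - 1) * exp (- x / 2) / (2 powr (real r / 2) * Gamma (real r / 2))
      else 0)"

definition herit :: "real \<Rightarrow> real \<Rightarrow> real" where
  "herit sa se = sa / (sa + se)"

definition fl :: "(nat \<Rightarrow> real) \<Rightarrow> nat \<Rightarrow> nat \<Rightarrow> real \<Rightarrow> real" where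
  "fl lam L l \<rho> = (1 + \<rho> * (lam l - 1)) / (1 + \<rho> * (lam (L - 1) - 1))"

definition gvec :: "(nat \<Rightarrow> real) \<Rightarrow> nat \<Rightarrow> real \<Rightarrow> nat \<Rightarrow> real" where
  "gvec lam L \<rho> l = deriv (\<lambda>t. ln (fl lam L l t)) \<rho>"

definition rows_basis_orth_compl :: "nat \<Rightarrow> (nat \<Rightarrow> nat \<Rightarrow> real) \<Rightarrow> (nat \<Rightarrow> real) \<Rightarrow> bool" where
  "rows_basis_orth_compl L M g \<longleftrightarrow>
     (\<forall>i<L - 2. (\<Sum>l<L - 1. M i l * g l) = 0) \<and>
     (\<forall>c. (\<forall>l<L - 1. (\<Sum>i<L - 2. c i * M i l) = 0) \<longrightarrow> (\<forall>i<L - 2. c i = 0)) \<and>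
     (\<forall>v. (\<Sum>l<L - 1. v l * g l) = 0 \<longrightarrow>
          (\<exists>c. \<forall>l<L - 1. v l = (\<Sum>i<L - 2. c i * M i l)))"

definition Hspace :: "nat \<Rightarrow> (nat \<Rightarrow> real) measure" where
  "Hspace L = PiM {..<L - 2} (\<lambda>_. borel)"

definition tau :: "nat \<Rightarrow> (nat \<Rightarrow> real) \<Rightarrow> real" where
  "tau L u = (\<Sum>l<L - 1. ln (u l))"

definition eta :: "nat \<Rightarrow> (nat \<Rightarrow> nat \<Rightarrow> real) \<Rightarrow> (nat \<Rightarrow> real) \<Rightarrow> nat \<Rightarrow> real" where
  "eta L M u = restrict (\<lambda>i. \<Sum>l<L - 1. M i l * ln (u l)) {..<L - 2}"

definition Tstat :: "nat \<Rightarrow> (nat \<Rightarrow> real) \<Rightarrow> real" where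
  "Tstat L x = (\<Sum>l<L - 1. ln (x l))"

definition Hstat :: "(nat \<Rightarrow> real) \<Rightarrow> nat \<Rightarrow> (nat \<Rightarrow> nat \<Rightarrow> real) \<Rightarrow> real \<Rightarrow> (nat \<Rightarrow> real) \<Rightarrow> nat \<Rightarrow> real" where
  "Hstat lam L M \<rho> x = restrict (\<lambda>i. \<Sum>l<L - 1. M i l * ln (x l / fl lam L l \<rho>)) {..<L - 2}"

definition phi :: "(nat \<Rightarrow> real) \<Rightarrow> nat \<Rightarrow> real \<Rightarrow> real" where
  "phi lam L \<rho> = (\<Sum>l<L - 1. ln (fl lam L l \<rho>))"

text \<open>K is a regular conditional distribution of the real random variable Y given
  the random element Z (with values in N): a probability kernel with
  \<open>P(Y \<in> B, Z \<in> C) = \<integral>_C K z B dP_Z(z)\<close>.\<close>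
definition cond_distr_kernel ::
  "'a measure \<Rightarrow> ('a \<Rightarrow> real) \<Rightarrow> ('a \<Rightarrow> 'b) \<Rightarrow> 'b measure \<Rightarrow> ('b \<Rightarrow> real measure) \<Rightarrow> bool" where
  "cond_distr_kernel M Y Z N K \<longleftrightarrow>
     (\<forall>z\<in>space N. prob_space (K z) \<and> sets (K z) = sets borel) \<and>
     (\<forall>B\<in>sets borel. (\<lambda>z. emeasure (K z) B) \<in> borel_measurable N) \<and>
     (\<forall>B\<in>sets borel. \<forall>C\<in>sets N.
        emeasure M {\<omega>\<in>space M. Y \<omega> \<in> B \<and> Z \<omega> \<in> C}
          = (\<integral>\<^sup>+ z. indicator C z * emeasure (K z) B \<partial>(distr M N Z)))"

text \<open>Mean \<open>\<mu>_\<rho>\<close> of \<open>P_{V|h,\<rho>}\<close> and distribution function \<open>F_{h,\<rho>}\<close> of \<open>|V - \<mu>_\<rho>|\<close>.\<close>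
definition kmean :: "('b \<Rightarrow> real measure) \<Rightarrow> 'b \<Rightarrow> real" where
  "kmean K h = (\<integral> v. v \<partial>(K h))"

definition kF :: "('b \<Rightarrow> real measure) \<Rightarrow> 'b \<Rightarrow> real \<Rightarrow> real" where
  "kF K h s = measure (K h) {v. \<bar>v - kmean K h\<bar> \<le> s}"

definition plaus ::
  "(nat \<Rightarrow> real) \<Rightarrow> nat \<Rightarrow> (nat \<Rightarrow> nat \<Rightarrow> real) \<Rightarrow> ((nat \<Rightarrow> real) \<Rightarrow> real measure) \<Rightarrow> real
    \<Rightarrow> (nat \<Rightarrow> real) \<Rightarrow> real" where
  "plaus lam L M K \<rho> x =
     (let h = Hstat lam L M \<rho> x
      in 1 - kF K h \<bar>Tstat L x - phi lam L \<rho> - kmean K h\<bar>)"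

end

theory Submission
  imports Defs
begin


lemma pit:
  fixes \<mu> :: "real measure" and c \<alpha> :: real
  assumes P: "prob_space \<mu>" and S: "sets \<mu> = sets borel"
    and at: "\<And>x. measure \<mu> {x} = 0" and a0: "0 < \<alpha>" and a1: "\<alpha> < 1"
  shows "measure \<mu> {v. 1 - measure \<mu> {w. \<bar>w - c\<bar> \<le> \<bar>v - c\<bar>} \<le> \<alpha>} = \<alpha>"
proof -
  interpret prob_space \<mu> by fact
  have sp: "space \<mu> = UNIV" using S sets_eq_imp_space_eq by fastforce
  have [measurable_cong]: "sets \<mu> = sets borel" by fact
  define \<nu> where "\<nu> = distr \<mu> borel (\<lambda>w. \<bar>w - c\<bar>)"
  interpret nu: real_distribution \<nu>
    unfolding \<nu>_def by (rule real_distribution.intro, rule prob_space_distr, simp_all add: real_distribution_axioms_def)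
  define G where "G = cdf \<nu>"
  have Gm: "G s = measure \<mu> {w. \<bar>w - c\<bar> \<le> s}" for s
    unfolding G_def cdf_def \<nu>_def by (subst measure_distr) (auto simp: sp vimage_def)
  have cont: "isCont G s" for s
  proof -
    have "measure \<nu> {s} = measure \<mu> {w. \<bar>w - c\<bar> = s}"
      unfolding \<nu>_def by (subst measure_distr) (auto simp: sp vimage_def)
    also have "\<dots> \<le> measure \<mu> {c + s, c - s}"
      by (rule finite_measure_mono) (auto simp: S)
    also have "\<dots> \<le> measure \<mu> {c + s} + measure \<mu> {c - s}"
      using measure_subadditive[of "{c+s}" \<mu> "{c-s}"] by (auto simp: S insert_commute)
    also have "\<dots> = 0" using at by simp
    finally have "measure \<nu> {s} = 0" by (simp add: measure_le_0_iff)
    then show ?thesis unfolding G_def using nu.isCont_cdf by blast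
  qed
  define \<beta> where "\<beta> = 1 - \<alpha>"
  have b0: "0 < \<beta>" "\<beta> < 1" using a0 a1 by (auto simp: \<beta>_def)
  define T where "T = {s. \<beta> \<le> G s}"
  have Tcl: "closed T" unfolding T_def
    by (rule closed_Collect_le) (auto intro!: continuous_at_imp_continuous_on cont)
  have Gneg: "G s = 0" if "s < 0" for s
    unfolding Gm using that by (smt (verit) Collect_empty_eq abs_ge_zero measure_empty)
  have Tb: "bdd_below T" unfolding T_def bdd_below_def
    by (rule exI[of _ 0]) (use Gneg b0 in \<open>force simp: not_le[symmetric]\<close>)
  have lim: "(G \<longlongrightarrow> 1) at_top" unfolding G_def using nu.cdf_lim_at_top_prob .
  then have "eventually (\<lambda>s. G s > \<beta>) at_top" using b0 by (simp add: order_tendstoD(1))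
  then obtain s0 where "G s0 > \<beta>" by (meson eventually_at_top_linorder order_refl)
  then have Tne: "T \<noteq> {}" unfolding T_def by (metis empty_Collect_eq less_imp_le)
  define s where "s = Inf T"
  have sT: "s \<in> T" unfolding s_def by (rule closed_contains_Inf[OF Tne Tb Tcl])
  have Gs: "G s = \<beta>"
  proof (rule ccontr)
    assume "G s \<noteq> \<beta>"
    with sT have gt: "G s > \<beta>" unfolding T_def by auto
    have "((\<lambda>y. G y) \<longlongrightarrow> G s) (at_left s)"
      using cont[of s] unfolding isCont_def filterlim_at_split by blast
    then have "eventually (\<lambda>y. G y > \<beta>) (at_left s)" using gt by (simp add: order_tendstoD(1))
    then obtain b where b: "b < s" "\<And>y. b < y \<Longrightarrow> y < s \<Longrightarrow> G y > \<beta>"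
      unfolding eventually_at_left_field by blast
    define y where "y = (b + s) / 2"
    have y: "y < s" "G y > \<beta>" using b unfolding y_def by auto
    then have "y \<in> T" unfolding T_def by auto
    then have "s \<le> y" unfolding s_def using Tb by (simp add: cInf_lower)
    with y show False by simp
  qed
  have eqset: "{v. 1 - measure \<mu> {w. \<bar>w - c\<bar> \<le> \<bar>v - c\<bar>} \<le> \<alpha>} = {v. s \<le> \<bar>v - c\<bar>}"
  proof safe
    fix v assume "1 - measure \<mu> {w. \<bar>w - c\<bar> \<le> \<bar>v - c\<bar>} \<le> \<alpha>"
    then have "\<bar>v - c\<bar> \<in> T" unfolding T_def Gm \<beta>_def by simp
    then show "s \<le> \<bar>v - c\<bar>" unfolding s_def using Tb by (simp add: cInf_lower)
  next
    fix v assume "s \<le> \<bar>v - c\<bar>"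
    then have "G s \<le> G \<bar>v - c\<bar>" unfolding G_def by (rule nu.cdf_nondecreasing)
    then show "1 - measure \<mu> {w. \<bar>w - c\<bar> \<le> \<bar>v - c\<bar>} \<le> \<alpha>" using Gs unfolding Gm \<beta>_def by simp
  qed
  have eq0: "measure \<mu> {w. \<bar>w - c\<bar> = s} = 0"
  proof -
    have "measure \<mu> {w. \<bar>w - c\<bar> = s} \<le> measure \<mu> {c + s, c - s}"
      by (rule finite_measure_mono) (auto simp: S)
    also have "\<dots> \<le> measure \<mu> {c + s} + measure \<mu> {c - s}"
      using measure_subadditive[of "{c+s}" \<mu> "{c-s}"] by (auto simp: S insert_commute)
    also have "\<dots> = 0" using at by simp
    finally show ?thesis by (simp add: measure_le_0_iff)
  qed
  have "measure \<mu> {w. \<bar>w - c\<bar> \<le> s} = measure \<mu> {w. \<bar>w - c\<bar> < s} + measure \<mu> {w. \<bar>w - c\<bar> = s}"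
    by (subst finite_measure_Union[symmetric]) (auto simp: S intro!: arg_cong[where f="measure \<mu>"])
  then have lt: "measure \<mu> {w. \<bar>w - c\<bar> < s} = \<beta>" using eq0 Gs Gm by simp
  have ce: "{v. s \<le> \<bar>v - c\<bar>} = space \<mu> - {w. \<bar>w - c\<bar> < s}" using sp by auto
  have "measure \<mu> {v. s \<le> \<bar>v - c\<bar>} = 1 - measure \<mu> {w. \<bar>w - c\<bar> < s}"
    unfolding ce by (rule prob_compl) (simp add: S)
  then show ?thesis using eqset lt \<beta>_def by simp
qed




lemma kernel_measurable:
  assumes ker: "cond_distr_kernel M Y Z N K"
  shows "K \<in> measurable N (subprob_algebra borel)"
  using ker unfolding cond_distr_kernel_def
  by (intro measurable_subprob_algebra) (auto simp: prob_space_imp_subprob_space)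

lemma disint:
  assumes P: "prob_space M" and ker: "cond_distr_kernel M Y Z N K"
    and Ym[measurable]: "Y \<in> borel_measurable M" and Zm[measurable]: "Z \<in> measurable M N"
    and A: "A \<in> sets (N \<Otimes>\<^sub>M borel)"
  shows "emeasure M {\<omega>\<in>space M. (Z \<omega>, Y \<omega>) \<in> A} = (\<integral>\<^sup>+z. emeasure (K z) (Pair z -` A) \<partial>(distr M N Z))"
proof -
  interpret prob_space M by fact
  have Km[measurable]: "K \<in> measurable N (subprob_algebra borel)" by (rule kernel_measurable[OF ker])
  have Kp: "\<And>z. z \<in> space N \<Longrightarrow> prob_space (K z)" and Ks: "\<And>z. z \<in> space N \<Longrightarrow> sets (K z) = sets borel"
    and Kr: "\<And>B C. B \<in> sets borel \<Longrightarrow> C \<in> sets N \<Longrightarrow>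
        emeasure M {\<omega>\<in>space M. Y \<omega> \<in> B \<and> Z \<omega> \<in> C} = (\<integral>\<^sup>+ z. indicator C z * emeasure (K z) B \<partial>(distr M N Z))"
    using ker unfolding cond_distr_kernel_def by auto
  have Ksp: "\<And>z. z \<in> space N \<Longrightarrow> space (K z) = UNIV"
  proof -
    fix z assume z: "z \<in> space N"
    have "space (K z) = space borel" using Ks[OF z] by (rule sets_eq_imp_space_eq)
    then show "space (K z) = UNIV" by simp
  qed
  define F where "F = (\<lambda>z. distr (K z) (N \<Otimes>\<^sub>M borel) (Pair z))"
  have Fm: "F \<in> measurable N (subprob_algebra (N \<Otimes>\<^sub>M borel))"
    unfolding F_def by (rule measurable_distr2[OF _ Km]) measurable
  have Fm': "F \<in> measurable (distr M N Z) (subprob_algebra (N \<Otimes>\<^sub>M borel))"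
    using Fm by simp
  have Nne: "space N \<noteq> {}" using measurable_space[OF Zm] not_empty by blast
  have Dne: "space (distr M N Z) \<noteq> {}" using Nne by simp
  define R where "R = distr M (N \<Otimes>\<^sub>M borel) (\<lambda>\<omega>. (Z \<omega>, Y \<omega>))"
  define Q where "Q = distr M N Z \<bind> F"
  have sF: "\<And>z. z \<in> space N \<Longrightarrow> sets (F z) = sets (N \<Otimes>\<^sub>M borel)" unfolding F_def by simp
  have eF: "emeasure (F z) A' = emeasure (K z) (Pair z -` A')" if z: "z \<in> space N" and A': "A' \<in> sets (N \<Otimes>\<^sub>M borel)" for z A'
    unfolding F_def using z A' Ks[OF z] Ksp[OF z]
    by (subst emeasure_distr) (auto simp: measurable_def space_pair_measure cong: measurable_cong_sets)
  have "R = Q"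
  proof (rule measure_eqI_generator_eq[OF Int_stable_pair_measure_generator[of N borel]])
    show "{a \<times> b |a b. a \<in> sets N \<and> b \<in> sets borel} \<subseteq> Pow (space N \<times> space borel)"
      using sets.sets_into_space by fastforce
    show "sets R = sigma_sets (space N \<times> space borel) {a \<times> b |a b. a \<in> sets N \<and> b \<in> sets borel}"
      unfolding R_def by (simp add: sets_pair_measure)
    show "sets Q = sigma_sets (space N \<times> space borel) {a \<times> b |a b. a \<in> sets N \<and> b \<in> sets borel}"
      unfolding Q_def using sF Dne by (subst sets_bind[where N="N \<Otimes>\<^sub>M borel"]) (auto simp: sets_pair_measure)
    show "range (\<lambda>i. space N \<times> space borel) \<subseteq> {a \<times> b |a b. a \<in> sets N \<and> b \<in> sets borel}" by blast
    show "(\<Union>i. space N \<times> space borel) = space N \<times> space borel" by simp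
    have "prob_space R" unfolding R_def by (rule prob_space_distr) simp
    then have "emeasure R (space R) = 1" by (rule prob_space.emeasure_space_1)
    moreover have "space R = space N \<times> space borel" unfolding R_def by (simp add: space_pair_measure)
    ultimately show "emeasure R (space N \<times> space borel) \<noteq> \<infinity>" by simp
    fix X assume "X \<in> {a \<times> b |a b. a \<in> sets N \<and> b \<in> sets (borel :: real measure)}"
    then obtain a b where X: "X = a \<times> b" and a: "a \<in> sets N" and b: "b \<in> sets borel" by auto
    have ee: "(\<lambda>\<omega>. (Z \<omega>, Y \<omega>)) -` (a \<times> b) \<inter> space M = {\<omega>\<in>space M. Y \<omega> \<in> b \<and> Z \<omega> \<in> a}" by blast
    have "emeasure R X = emeasure M {\<omega>\<in>space M. Y \<omega> \<in> b \<and> Z \<omega> \<in> a}"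
      unfolding R_def X ee[symmetric] using a b by (intro emeasure_distr) auto
    also have "\<dots> = (\<integral>\<^sup>+ z. indicator a z * emeasure (K z) b \<partial>(distr M N Z))" using Kr[OF b a] .
    also have "\<dots> = (\<integral>\<^sup>+ z. emeasure (F z) X \<partial>(distr M N Z))"
    proof (rule nn_integral_cong)
      fix z assume "z \<in> space (distr M N Z)"
      then have z: "z \<in> space N" by simp
      show "indicator a z * emeasure (K z) b = emeasure (F z) X"
        using a b by (subst eF[OF z]) (auto simp: X indicator_def vimage_def)
    qed
    also have "\<dots> = emeasure Q X" unfolding Q_def
      using a b X by (subst emeasure_bind[OF Dne Fm']) auto
    finally show "emeasure R X = emeasure Q X" .
  qed
  have ee2: "(\<lambda>\<omega>. (Z \<omega>, Y \<omega>)) -` A \<inter> space M = {\<omega>\<in>space M. (Z \<omega>, Y \<omega>) \<in> A}" by blast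
  have "emeasure M {\<omega>\<in>space M. (Z \<omega>, Y \<omega>) \<in> A} = emeasure R A"
    unfolding R_def ee2[symmetric] using A by (intro emeasure_distr[symmetric]) auto
  also have "\<dots> = emeasure Q A" using \<open>R = Q\<close> by simp
  also have "\<dots> = (\<integral>\<^sup>+ z. emeasure (F z) A \<partial>(distr M N Z))" unfolding Q_def
    using A by (subst emeasure_bind[OF Dne Fm']) auto
  also have "\<dots> = (\<integral>\<^sup>+z. emeasure (K z) (Pair z -` A) \<partial>(distr M N Z))"
    by (rule nn_integral_cong) (simp add: eF A)
  finally show ?thesis .
qed




lemma psf_lborel: "product_sigma_finite (\<lambda>_::nat. lborel :: real measure)"
  by (simp add: product_sigma_finite_def sigma_finite_lborel)

lemma sfm_PiM_lborel: "finite I \<Longrightarrow> sigma_finite_measure (PiM I (\<lambda>_::nat. lborel :: real measure))"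
  by (rule product_sigma_finite.sigma_finite[OF psf_lborel])

lemma lborel_translate_vimage:
  fixes c :: real assumes "A \<in> sets borel"
  shows "emeasure lborel ((\<lambda>v. v + c) -` A) = emeasure lborel A"
proof -
  have "emeasure lborel A = emeasure (distr lborel borel ((+) c)) A" by (simp add: lborel_distr_plus)
  also have "\<dots> = emeasure lborel ((+) c -` A \<inter> space lborel)" using assms by (simp add: emeasure_distr)
  also have "(+) c -` A \<inter> space lborel = (\<lambda>v. v + c) -` A" by (auto simp: add.commute)
  finally show ?thesis by simp
qed

lemma vimage_plus_borel: "A \<in> sets borel \<Longrightarrow> (\<lambda>v::real. v + c) -` A \<in> sets borel"
  using measurable_sets[of "\<lambda>v::real. v + c" borel borel A] by simp

lemma PiM_lborel_translate:
  fixes I :: "nat set" and t :: "nat \<Rightarrow> real"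
  assumes I: "finite I"
  shows "distr (PiM I (\<lambda>_. lborel)) (PiM I (\<lambda>_. lborel)) (\<lambda>x. restrict (\<lambda>i. x i + t i) I) = PiM I (\<lambda>_. lborel)"
proof -
  interpret product_sigma_finite "\<lambda>_::nat. lborel :: real measure" by (rule psf_lborel)
  have Tm: "(\<lambda>x. restrict (\<lambda>i. x i + t i) I) \<in> measurable (PiM I (\<lambda>_. lborel)) (PiM I (\<lambda>_. lborel))"
    by measurable
  show ?thesis
  proof (rule PiM_eqI[OF I])
    show "sets (distr (PiM I (\<lambda>_. lborel)) (PiM I (\<lambda>_. lborel)) (\<lambda>x. restrict (\<lambda>i. x i + t i) I)) = sets (PiM I (\<lambda>_. lborel))" by simp
    fix A :: "nat \<Rightarrow> real set" assume A: "\<And>i. i \<in> I \<Longrightarrow> A i \<in> sets lborel"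
    have eq: "(\<lambda>x. restrict (\<lambda>i. x i + t i) I) -` Pi\<^sub>E I A \<inter> space (PiM I (\<lambda>_. lborel)) = Pi\<^sub>E I (\<lambda>i. (\<lambda>v. v + t i) -` A i)"
      by (auto simp: space_PiM PiE_def Pi_def extensional_def)
    have "emeasure (distr (PiM I (\<lambda>_. lborel)) (PiM I (\<lambda>_. lborel)) (\<lambda>x. restrict (\<lambda>i. x i + t i) I)) (Pi\<^sub>E I A)
        = emeasure (PiM I (\<lambda>_. lborel)) (Pi\<^sub>E I (\<lambda>i. (\<lambda>v. v + t i) -` A i))"
      using A by (subst emeasure_distr[OF Tm]) (auto simp: eq intro!: sets_PiM_I_finite I)
    also have "\<dots> = (\<Prod>i\<in>I. emeasure lborel ((\<lambda>v. v + t i) -` A i))"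
      using A by (intro emeasure_PiM[OF I]) (auto intro: vimage_plus_borel)
    also have "\<dots> = (\<Prod>i\<in>I. emeasure lborel (A i))"
      using A by (intro prod.cong refl lborel_translate_vimage) auto
    finally show "emeasure (distr (PiM I (\<lambda>_. lborel)) (PiM I (\<lambda>_. lborel)) (\<lambda>x. restrict (\<lambda>i. x i + t i) I)) (Pi\<^sub>E I A) = (\<Prod>i\<in>I. emeasure lborel (A i))" .
  qed
qed

lemma nn_integral_PiM_translate:
  fixes I :: "nat set" and t :: "nat \<Rightarrow> real"
  assumes I: "finite I" and f: "f \<in> borel_measurable (PiM I (\<lambda>_. lborel))"
  shows "(\<integral>\<^sup>+x. f (restrict (\<lambda>i. x i + t i) I) \<partial>PiM I (\<lambda>_. lborel)) = (\<integral>\<^sup>+x. f x \<partial>PiM I (\<lambda>_. lborel))"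
proof -
  have Tm: "(\<lambda>x. restrict (\<lambda>i. x i + t i) I) \<in> measurable (PiM I (\<lambda>_. lborel)) (PiM I (\<lambda>_. lborel))"
    by measurable
  have "(\<integral>\<^sup>+x. f x \<partial>PiM I (\<lambda>_. lborel)) = (\<integral>\<^sup>+x. f x \<partial>distr (PiM I (\<lambda>_. lborel)) (PiM I (\<lambda>_. lborel)) (\<lambda>x. restrict (\<lambda>i. x i + t i) I))"
    using PiM_lborel_translate[OF I, of t] by simp
  also have "\<dots> = (\<integral>\<^sup>+x. f (restrict (\<lambda>i. x i + t i) I) \<partial>PiM I (\<lambda>_. lborel))"
    by (rule nn_integral_distr[OF Tm]) (use f in simp)
  finally show ?thesis ..
qed


lemma sum_split0: "finite I' \<Longrightarrow> (0::nat) \<notin> I' \<Longrightarrow> insert 0 I' = S \<Longrightarrow> sum F S = F 0 + sum F I'"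
  by (metis sum.insert)

lemma shear_null:
  fixes n m :: nat and Mm :: "nat \<Rightarrow> nat \<Rightarrow> real" and d :: "nat \<Rightarrow> real"
    and A :: "((nat \<Rightarrow> real) \<times> real) set"
  assumes n: "n \<ge> 1" and d0: "d 0 = 1" and Md: "\<forall>i<m. (\<Sum>l<n. Mm i l * d l) = 0"
    and Dsum: "(\<Sum>l<n. d l) \<noteq> 0"
    and A: "A \<in> sets (PiM {..<m} (\<lambda>_. borel) \<Otimes>\<^sub>M borel)" and cnt: "\<forall>h. countable {v. (h, v) \<in> A}"
  shows "emeasure (PiM {..<n} (\<lambda>_. lborel))
           {x \<in> space (PiM {..<n} (\<lambda>_. lborel)). (restrict (\<lambda>i. \<Sum>l<n. Mm i l * x l) {..<m}, \<Sum>l<n. x l) \<in> A} = 0"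
proof -
  interpret product_sigma_finite "\<lambda>_::nat. lborel :: real measure" by (rule psf_lborel)
  define I' where "I' = {1..<n}"
  have I'f: "finite I'" and I'0: "0 \<notin> I'" and ins: "insert 0 I' = {..<n}"
    using n by (auto simp: I'_def)
  define PL where "PL = PiM {..<n} (\<lambda>_::nat. lborel :: real measure)"
  define PL' where "PL' = PiM I' (\<lambda>_::nat. lborel :: real measure)"
  define E where "E = (\<lambda>x::nat\<Rightarrow>real. (restrict (\<lambda>i. \<Sum>l<n. Mm i l * x l) {..<m}, \<Sum>l<n. x l))"
  have Em: "E \<in> measurable PL (PiM {..<m} (\<lambda>_. borel) \<Otimes>\<^sub>M borel)"
    unfolding E_def PL_def by measurable
  define N' where "N' = {x \<in> space PL. E x \<in> A}"
  have N'm: "N' \<in> sets PL" unfolding N'_def using measurable_sets[OF Em A] by (simp add: vimage_def Int_def conj_commute)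
  define T where "T = (\<lambda>y::real. \<lambda>x::nat\<Rightarrow>real. restrict (\<lambda>i. x i + y * d i) I')"
  define G where "G = (\<lambda>x::nat\<Rightarrow>real. \<lambda>y::real. restrict (\<lambda>i. if i = 0 then y else x i + y * d i) {..<n})"
  have TG: "(T y x)(0 := y) = G x y" for x y
    unfolding T_def G_def using I'0 ins by (auto simp: fun_eq_iff)
  have Gm: "(\<lambda>(x, y). G x y) \<in> measurable (PL' \<Otimes>\<^sub>M lborel) PL"
  proof -
    have eqG: "(\<lambda>(x, y). G x y) = (\<lambda>p. \<lambda>i\<in>{..<n}. (\<lambda>i p. if i = 0 then snd p else fst p i + snd p * d i) i p)"
      unfolding G_def by (auto simp: fun_eq_iff)
    show ?thesis unfolding eqG PL_def
  proof (rule measurable_restrict)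
    fix i assume i: "i \<in> {..<n}"
    show "(\<lambda>p. if i = 0 then snd p else fst p i + snd p * d i) \<in> measurable (PL' \<Otimes>\<^sub>M lborel) lborel"
    proof (cases "i = 0")
      case True then show ?thesis by simp
    next
      case False
      with i have iI: "i \<in> I'" by (auto simp: I'_def)
      have [measurable]: "(\<lambda>x::nat\<Rightarrow>real. x i) \<in> borel_measurable PL'"
        unfolding PL'_def using measurable_component_singleton[OF iI, of "\<lambda>_. lborel"] by simp
      show ?thesis using False by simp
    qed
  qed
  qed
  have indm: "(\<lambda>x. indicator N' x :: ennreal) \<in> borel_measurable PL" using N'm by simp
  have "emeasure PL N' = (\<integral>\<^sup>+x. indicator N' x \<partial>PL)" using N'm by simp
  also have "\<dots> = (\<integral>\<^sup>+y. (\<integral>\<^sup>+x. indicator N' (x(0 := y)) \<partial>PL') \<partial>lborel)"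
    unfolding PL_def PL'_def ins[symmetric]
    by (rule product_nn_integral_insert_rev[OF I'f I'0]) (use indm in \<open>simp add: PL_def ins\<close>)
  also have "\<dots> = (\<integral>\<^sup>+y. (\<integral>\<^sup>+x. indicator N' (G x y) \<partial>PL') \<partial>lborel)"
  proof (rule nn_integral_cong)
    fix y :: real
    have fm: "(\<lambda>x. indicator N' (x(0 := y)) :: ennreal) \<in> borel_measurable PL'"
    proof -
      have r: "(\<lambda>x. \<lambda>i\<in>{..<n}. (\<lambda>i x. if i = 0 then y else x i) i x) \<in> measurable PL' PL"
        unfolding PL_def
      proof (rule measurable_restrict)
        fix i assume i: "i \<in> {..<n}"
        show "(\<lambda>x. if i = 0 then y else x i) \<in> measurable PL' lborel"
        proof (cases "i = 0")
          case True then show ?thesis by simp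
        next
          case False
          with i have iI: "i \<in> I'" by (auto simp: I'_def)
          show ?thesis using False
            unfolding PL'_def using measurable_component_singleton[OF iI, of "\<lambda>_. lborel"] by simp
        qed
      qed
      have "x(0 := y) = (\<lambda>i\<in>{..<n}. (\<lambda>i x. if i = 0 then y else x i) i x)" if "x \<in> space PL'" for x
        using that I'0 ins unfolding PL'_def by (auto simp: space_PiM PiE_def extensional_def fun_eq_iff)
      then have "(\<lambda>x. x(0 := y)) \<in> measurable PL' PL"
        using r by (subst measurable_cong) auto
      then show ?thesis using indm by (rule measurable_compose)
    qed
    have "(\<integral>\<^sup>+x. indicator N' (x(0 := y)) \<partial>PL') = (\<integral>\<^sup>+x. indicator N' ((restrict (\<lambda>i. x i + y * d i) I')(0 := y)) \<partial>PL')"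
      unfolding PL'_def by (rule nn_integral_PiM_translate[OF I'f, symmetric]) (use fm in \<open>simp add: PL'_def\<close>)
    then show "(\<integral>\<^sup>+x. indicator N' (x(0 := y)) \<partial>PL') = (\<integral>\<^sup>+x. indicator N' (G x y) \<partial>PL')"
      using TG by (simp add: T_def)
  qed
  also have "\<dots> = (\<integral>\<^sup>+x. (\<integral>\<^sup>+y. indicator N' (G x y) \<partial>lborel) \<partial>PL')"
  proof (rule pair_sigma_finite.Fubini')
    show "pair_sigma_finite PL' lborel" unfolding PL'_def
      by (intro pair_sigma_finite.intro sfm_PiM_lborel I'f sigma_finite_lborel)
    show "(\<lambda>(x, y). indicator N' (G x y) :: ennreal) \<in> borel_measurable (PL' \<Otimes>\<^sub>M lborel)"
      using measurable_compose[OF Gm indm] by (simp add: case_prod_beta')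
  qed
  also have "\<dots> = (\<integral>\<^sup>+x. 0 \<partial>PL')"
  proof (rule nn_integral_cong)
    fix x assume x: "x \<in> space PL'"
    define hx where "hx = restrict (\<lambda>i. \<Sum>l\<in>I'. Mm i l * x l) {..<m}"
    define sx where "sx = (\<Sum>l\<in>I'. x l)"
    define D where "D = (\<Sum>l<n. d l)"
    have GE: "E (G x y) = (hx, sx + y * D)" for y
    proof -
      have s1: "(\<Sum>l<n. Mm i l * G x y l) = (\<Sum>l\<in>I'. Mm i l * x l)" if i: "i < m" for i
      proof -
        have "(\<Sum>l<n. Mm i l * G x y l) = Mm i 0 * G x y 0 + (\<Sum>l\<in>I'. Mm i l * G x y l)"
          by (rule sum_split0[OF I'f I'0 ins])
        also have "\<dots> = Mm i 0 * y + (\<Sum>l\<in>I'. Mm i l * (x l + y * d l))"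
          using I'0 n ins by (auto simp: G_def I'_def intro!: sum.cong)
        also have "\<dots> = (\<Sum>l\<in>I'. Mm i l * x l) + y * (Mm i 0 * d 0 + (\<Sum>l\<in>I'. Mm i l * d l))"
          using d0 by (simp add: algebra_simps sum.distrib sum_distrib_left)
        also have "Mm i 0 * d 0 + (\<Sum>l\<in>I'. Mm i l * d l) = (\<Sum>l<n. Mm i l * d l)"
          by (rule sum_split0[OF I'f I'0 ins, symmetric])
        also have "\<dots> = 0" using Md i by simp
        finally show ?thesis by simp
      qed
      have s2: "(\<Sum>l<n. G x y l) = sx + y * D"
      proof -
        have "(\<Sum>l<n. G x y l) = G x y 0 + (\<Sum>l\<in>I'. G x y l)"
          by (rule sum_split0[OF I'f I'0 ins])
        also have "\<dots> = y + (\<Sum>l\<in>I'. (x l + y * d l))"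
          using I'0 n ins by (auto simp: G_def I'_def intro!: sum.cong)
        also have "\<dots> = sx + y * (d 0 + (\<Sum>l\<in>I'. d l))"
          using d0 by (simp add: sx_def algebra_simps sum.distrib sum_distrib_left)
        also have "d 0 + (\<Sum>l\<in>I'. d l) = D"
          unfolding D_def by (rule sum_split0[OF I'f I'0 ins, symmetric])
        finally show ?thesis .
      qed
      show ?thesis unfolding E_def hx_def using s1 s2 by (auto simp: fun_eq_iff)
    qed
    define Cx where "Cx = (\<lambda>v. (v - sx) / D) ` {v. (hx, v) \<in> A}"
    have Dnz: "D \<noteq> 0" using Dsum D_def by simp
    have sub: "indicator N' (G x y) \<le> (indicator Cx y :: ennreal)" for y
    proof (cases "G x y \<in> N'")
      case True
      then have "E (G x y) \<in> A" unfolding N'_def by simp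
      then have "(hx, sx + y * D) \<in> A" using GE by simp
      moreover have "y = ((sx + y * D) - sx) / D" using Dnz by simp
      ultimately have "y \<in> Cx" unfolding Cx_def by blast
      then show ?thesis by (simp add: indicator_def)
    qed simp
    have cC: "countable Cx" unfolding Cx_def using cnt by simp
    have "Cx \<in> null_sets lborel" using cC by (rule countable_imp_null_set_lborel)
    then have Cm: "Cx \<in> sets lborel" and C0: "emeasure lborel Cx = 0" by auto
    have "(\<integral>\<^sup>+y. indicator N' (G x y) \<partial>lborel) \<le> (\<integral>\<^sup>+y. indicator Cx y \<partial>lborel)"
      by (rule nn_integral_mono) (rule sub)
    also have "\<dots> = 0" using Cm C0 by simp
    finally show "(\<integral>\<^sup>+y. indicator N' (G x y) \<partial>lborel) = 0" by simp
  qed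
  also have "\<dots> = 0" by simp
  finally show ?thesis unfolding N'_def E_def PL_def by simp
qed




lemma chi2_pos_as:
  assumes P: "prob_space \<Omega>" and dist: "distributed \<Omega> lborel X (\<lambda>x. ennreal (chi2_density r x))"
  shows "emeasure \<Omega> {\<omega>\<in>space \<Omega>. X \<omega> \<le> 0} = 0"
proof -
  have Xm[measurable]: "X \<in> borel_measurable \<Omega>" using dist unfolding distributed_def by simp
  have gm: "(\<lambda>x. ennreal (chi2_density r x)) \<in> borel_measurable lborel" using dist unfolding distributed_def by simp
  have "emeasure \<Omega> {\<omega>\<in>space \<Omega>. X \<omega> \<le> 0} = emeasure (distr \<Omega> lborel X) {..0}"
    by (subst emeasure_distr) (auto intro!: arg_cong[where f="emeasure \<Omega>"])
  also have "\<dots> = emeasure (density lborel (\<lambda>x. ennreal (chi2_density r x))) {..0}"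
    using dist unfolding distributed_def by simp
  also have "\<dots> = (\<integral>\<^sup>+x. ennreal (chi2_density r x) * indicator {..0} x \<partial>lborel)"
    using gm by (subst emeasure_density) auto
  also have "(\<lambda>x. ennreal (chi2_density r x) * indicator {..0} x) = (\<lambda>x. 0)"
    by (auto simp: fun_eq_iff chi2_density_def indicator_def)
  finally show ?thesis by simp
qed

lemma ln_rv_ac:
  assumes P: "prob_space \<Omega>" and dist: "distributed \<Omega> lborel X (\<lambda>x. ennreal (chi2_density r x))"
  shows "absolutely_continuous lborel (distr \<Omega> lborel (\<lambda>\<omega>. ln (X \<omega>)))"
  unfolding absolutely_continuous_def
proof
  fix B :: "real set" assume B: "B \<in> null_sets lborel"
  have Xm[measurable]: "X \<in> borel_measurable \<Omega>" using dist unfolding distributed_def by simp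
  have gm: "(\<lambda>x. ennreal (chi2_density r x)) \<in> borel_measurable lborel" using dist unfolding distributed_def by simp
  have Bs[measurable]: "B \<in> sets borel" using B by auto
  define S where "S = {x::real. 0 < x \<and> ln x \<in> B}"
  have Sm[measurable]: "S \<in> sets borel" unfolding S_def by measurable
  have SB: "S = exp ` B" unfolding S_def by (auto simp: image_iff) (metis exp_ln)
  have "negligible B" using B by (simp add: negligible_iff_null_sets null_sets_completionI)
  then have "negligible (exp ` B)"
    by (rule negligible_differentiable_image_negligible[OF order_refl])
       (auto intro!: differentiable_at_imp_differentiable_on
          intro: differentiableI[OF has_field_derivative_imp_has_derivative[OF DERIV_exp]])
  then have "S \<in> null_sets lebesgue" unfolding SB[symmetric] by (simp add: negligible_iff_null_sets)
  then have Sn: "S \<in> null_sets lborel" using Sm by (simp add: null_sets_completion_iff)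
  have "emeasure \<Omega> {\<omega>\<in>space \<Omega>. X \<omega> \<in> S} = emeasure (distr \<Omega> lborel X) S"
    by (subst emeasure_distr) (auto intro!: arg_cong[where f="emeasure \<Omega>"])
  also have "\<dots> = emeasure (density lborel (\<lambda>x. ennreal (chi2_density r x))) S"
    using dist unfolding distributed_def by simp
  also have "\<dots> = 0" using absolutely_continuousI_density[OF gm] Sn
    unfolding absolutely_continuous_def by auto
  finally have e1: "emeasure \<Omega> {\<omega>\<in>space \<Omega>. X \<omega> \<in> S} = 0" .
  have e2: "emeasure \<Omega> {\<omega>\<in>space \<Omega>. X \<omega> \<le> 0} = 0" by (rule chi2_pos_as[OF P dist])
  have "emeasure (distr \<Omega> lborel (\<lambda>\<omega>. ln (X \<omega>))) B = emeasure \<Omega> {\<omega>\<in>space \<Omega>. ln (X \<omega>) \<in> B}"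
    by (subst emeasure_distr) (auto intro!: arg_cong[where f="emeasure \<Omega>"])
  also have "\<dots> \<le> emeasure \<Omega> ({\<omega>\<in>space \<Omega>. X \<omega> \<in> S} \<union> {\<omega>\<in>space \<Omega>. X \<omega> \<le> 0})"
    by (rule emeasure_mono) (auto simp: S_def not_le[symmetric])
  also have "\<dots> \<le> emeasure \<Omega> {\<omega>\<in>space \<Omega>. X \<omega> \<in> S} + emeasure \<Omega> {\<omega>\<in>space \<Omega>. X \<omega> \<le> 0}"
    by (rule emeasure_subadditive) auto
  also have "\<dots> = 0" using e1 e2 by simp
  finally show "B \<in> null_sets (distr \<Omega> lborel (\<lambda>\<omega>. ln (X \<omega>)))" using Bs by auto
qed


lemma indicator_PiE_prod:
  fixes A :: "nat \<Rightarrow> 'b set" and x :: "nat \<Rightarrow> 'b"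
  assumes I: "finite I" and x: "x \<in> extensional I"
  shows "(indicator (Pi\<^sub>E I A) x :: ennreal) = (\<Prod>i\<in>I. indicator (A i) (x i))"
proof (cases "\<forall>i\<in>I. x i \<in> A i")
  case True then show ?thesis using x by (simp add: indicator_def PiE_def)
next
  case False
  then obtain i where "i \<in> I" "x i \<notin> A i" by auto
  then have "(\<Prod>i\<in>I. indicator (A i) (x i) :: ennreal) = 0" using I by (intro prod_zero) (auto intro!: bexI[of _ i])
  moreover have "x \<notin> Pi\<^sub>E I A" using False by (auto simp: PiE_def)
  ultimately show ?thesis by simp
qed

lemma PiM_density_lborel:
  fixes I :: "nat set" and f :: "nat \<Rightarrow> real \<Rightarrow> ennreal"
  assumes I: "finite I" and fm: "\<And>i. f i \<in> borel_measurable lborel"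
    and sf: "\<And>i. sigma_finite_measure (density lborel (f i))"
  shows "PiM I (\<lambda>i. density lborel (f i)) = density (PiM I (\<lambda>_. lborel)) (\<lambda>x. \<Prod>i\<in>I. f i (x i))"
proof -
  interpret D: product_sigma_finite "\<lambda>i. density lborel (f i)" by (simp add: product_sigma_finite_def sf)
  interpret L: product_sigma_finite "\<lambda>_::nat. lborel :: real measure" by (rule psf_lborel)
  have Fm: "(\<lambda>x. \<Prod>i\<in>I. f i (x i)) \<in> borel_measurable (PiM I (\<lambda>_. lborel))"
    using fm by measurable
  show ?thesis
  proof (rule D.PiM_eqI[OF I, symmetric])
    show "sets (density (PiM I (\<lambda>_. lborel)) (\<lambda>x. \<Prod>i\<in>I. f i (x i))) = sets (PiM I (\<lambda>i. density lborel (f i)))"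
      by (simp cong: sets_PiM_cong)
    fix A :: "nat \<Rightarrow> real set" assume A: "\<And>i. i \<in> I \<Longrightarrow> A i \<in> sets (density lborel (f i))"
    then have A': "\<And>i. i \<in> I \<Longrightarrow> A i \<in> sets lborel" by simp
    have PA: "Pi\<^sub>E I A \<in> sets (PiM I (\<lambda>_. lborel))" using A' by (intro sets_PiM_I_finite I) auto
    have "emeasure (density (PiM I (\<lambda>_. lborel)) (\<lambda>x. \<Prod>i\<in>I. f i (x i))) (Pi\<^sub>E I A)
        = (\<integral>\<^sup>+x. (\<Prod>i\<in>I. f i (x i)) * indicator (Pi\<^sub>E I A) x \<partial>PiM I (\<lambda>_. lborel))"
      by (rule emeasure_density[OF Fm PA])
    also have "\<dots> = (\<integral>\<^sup>+x. (\<Prod>i\<in>I. f i (x i) * indicator (A i) (x i)) \<partial>PiM I (\<lambda>_. lborel))"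
    proof (rule nn_integral_cong)
      fix x assume "x \<in> space (PiM I (\<lambda>_. lborel :: real measure))"
      then have "x \<in> extensional I" by (simp add: space_PiM PiE_def)
      then show "(\<Prod>i\<in>I. f i (x i)) * indicator (Pi\<^sub>E I A) x = (\<Prod>i\<in>I. f i (x i) * indicator (A i) (x i))"
        by (simp add: indicator_PiE_prod[OF I] prod.distrib)
    qed
    also have "\<dots> = (\<Prod>i\<in>I. (\<integral>\<^sup>+y. f i y * indicator (A i) y \<partial>lborel))"
      using A' fm by (intro L.product_nn_integral_prod I) auto
    also have "\<dots> = (\<Prod>i\<in>I. emeasure (density lborel (f i)) (A i))"
      using A' fm by (intro prod.cong refl emeasure_density[symmetric]) auto
    finally show "emeasure (density (PiM I (\<lambda>_. lborel)) (\<lambda>x. \<Prod>i\<in>I. f i (x i))) (Pi\<^sub>E I A) = (\<Prod>i\<in>I. emeasure (density lborel (f i)) (A i))" .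
  qed
qed


lemma lu_null:
  fixes \<Omega> :: "'a measure" and V :: "nat \<Rightarrow> 'a \<Rightarrow> real" and r :: "nat \<Rightarrow> nat" and L :: nat
    and c :: "nat \<Rightarrow> real"
  assumes P: "prob_space \<Omega>" and L2: "L \<ge> 2"
    and ind: "prob_space.indep_vars \<Omega> (\<lambda>_. borel) V {..<L}"
    and dist: "\<forall>l<L. distributed \<Omega> lborel (V l) (\<lambda>x. ennreal (chi2_density (r l) x))"
    and N'm: "N' \<in> sets (PiM {..<L-1} (\<lambda>_. lborel))" and N'0: "emeasure (PiM {..<L-1} (\<lambda>_. lborel)) N' = 0"
  shows "emeasure \<Omega> {\<omega>\<in>space \<Omega>. (\<lambda>l\<in>{..<L-1}. ln (V l \<omega>) - ln (V (L-1) \<omega>) + c l) \<in> N'} = 0"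
proof -
  interpret prob_space \<Omega> by fact
  interpret PL: product_sigma_finite "\<lambda>_::nat. lborel :: real measure" by (rule psf_lborel)
  define n where "n = L - 1"
  have ins: "insert n {..<n} = {..<L}" and nn: "n \<notin> {..<n}" using L2 by (auto simp: n_def)
  define W where "W = (\<lambda>l \<omega>. ln (V l \<omega>))"
  have Vm: "\<And>l. l < L \<Longrightarrow> V l \<in> borel_measurable \<Omega>" using dist unfolding distributed_def by auto
  have Wm: "\<And>l. l \<in> {..<L} \<Longrightarrow> random_variable borel (W l)" unfolding W_def using Vm by auto
  have indW: "indep_vars (\<lambda>_. borel) W {..<L}"
    unfolding W_def by (rule indep_vars_compose2[OF ind]) auto
  define \<mu> where "\<mu> = (\<lambda>l. distr \<Omega> borel (W l))"
  have Q: "distr \<Omega> (PiM {..<L} (\<lambda>_. borel)) (\<lambda>\<omega>. \<lambda>l\<in>{..<L}. W l \<omega>) = PiM {..<L} \<mu>"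
  proof -
    have "0 \<in> {..<L}" using L2 by simp
    then have ne: "{..<L} \<noteq> {}" by blast
    show ?thesis unfolding \<mu>_def using indep_vars_iff_distr_eq_PiM'[where I="{..<L}" and M'="\<lambda>_. borel" and X=W, OF ne] indW Wm by blast
  qed
  have ac: "absolutely_continuous lborel (\<mu> l)" if l: "l < L" for l
  proof -
    have "\<mu> l = distr \<Omega> lborel (\<lambda>\<omega>. ln (V l \<omega>))" unfolding \<mu>_def W_def by (rule distr_cong) auto
    moreover have "distributed \<Omega> lborel (V l) (\<lambda>x. ennreal (chi2_density (r l) x))" using dist l by simp
    ultimately show ?thesis using ln_rv_ac[OF P] by metis
  qed
  have "\<forall>l<L. \<exists>f\<in>borel_measurable lborel. density lborel f = \<mu> l"
  proof (intro allI impI)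
    fix l assume l: "l < L"
    show "\<exists>f\<in>borel_measurable lborel. density lborel f = \<mu> l"
      by (rule sigma_finite_measure.Radon_Nikodym[OF sigma_finite_lborel ac[OF l]]) (simp add: \<mu>_def)
  qed
  then obtain F where F: "\<And>l. l < L \<Longrightarrow> F l \<in> borel_measurable lborel" "\<And>l. l < L \<Longrightarrow> density lborel (F l) = \<mu> l"
    by metis
  define F' where "F' = (\<lambda>l. if l < L then F l else (\<lambda>_. 0))"
  have F'm: "\<And>l. F' l \<in> borel_measurable lborel" unfolding F'_def using F by auto
  have F'sf: "sigma_finite_measure (density lborel (F' l))" for l
  proof (cases "l < L")
    case True
    have "prob_space (\<mu> l)" unfolding \<mu>_def using Wm True by (intro prob_space_distr) auto
    then have "finite_measure (\<mu> l)" by (simp add: prob_space_def)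
    then show ?thesis using True F by (simp add: F'_def finite_measure_def)
  next
    case False
    have "finite_measure (density lborel (F' l))" using False
      by (intro finite_measureI) (simp add: F'_def emeasure_density)
    then show ?thesis by (simp add: finite_measure_def)
  qed
  define PiL where "PiL = PiM {..<L} (\<lambda>_::nat. lborel :: real measure)"
  define Fp where "Fp = (\<lambda>x. \<Prod>i\<in>{..<L}. F' i (x i))"
  have "PiM {..<L} \<mu> = PiM {..<L} (\<lambda>l. density lborel (F' l))"
    by (rule PiM_cong) (auto simp: F'_def F)
  also have "\<dots> = density PiL Fp"
    unfolding PiL_def Fp_def by (rule PiM_density_lborel[OF _ F'm F'sf]) simp
  finally have Qd: "PiM {..<L} \<mu> = density PiL Fp" .
  have Fpm: "Fp \<in> borel_measurable PiL" unfolding Fp_def PiL_def using F'm by measurable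
  define PL where "PL = PiM {..<n} (\<lambda>_::nat. lborel :: real measure)"
  define S where "S = {w \<in> space PiL. (\<lambda>l\<in>{..<n}. w l - w n + c l) \<in> N'}"
  have N'm': "N' \<in> sets PL" using N'm by (simp add: PL_def n_def)
  have mapm: "(\<lambda>w. \<lambda>l\<in>{..<n}. w l - w n + c l) \<in> measurable PiL PL"
    unfolding PiL_def PL_def
  proof (rule measurable_restrict)
    fix l assume "l \<in> {..<n}"
    then have l: "l \<in> {..<L}" using ins by auto
    have nL: "n \<in> {..<L}" using ins by auto
    have a: "(\<lambda>x::nat\<Rightarrow>real. x l) \<in> borel_measurable (PiM {..<L} (\<lambda>_. lborel))"
      using measurable_component_singleton[OF l, of "\<lambda>_. lborel"] by simp
    have b: "(\<lambda>x::nat\<Rightarrow>real. x n) \<in> borel_measurable (PiM {..<L} (\<lambda>_. lborel))"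
      using measurable_component_singleton[OF nL, of "\<lambda>_. lborel"] by simp
    have "(\<lambda>w::nat\<Rightarrow>real. w l - w n + c l) \<in> borel_measurable (PiM {..<L} (\<lambda>_. lborel))"
      using a b by (intro borel_measurable_add borel_measurable_diff) auto
    then show "(\<lambda>w. w l - w n + c l) \<in> measurable (PiM {..<L} (\<lambda>_. lborel)) lborel" by simp
  qed
  have Sm: "S \<in> sets PiL" unfolding S_def using measurable_sets[OF mapm N'm'] by (simp add: vimage_def Int_def conj_commute)
  have S0: "emeasure PiL S = 0"
  proof -
    have indm: "(\<lambda>x. indicator S x :: ennreal) \<in> borel_measurable PiL" using Sm by simp
    have "emeasure PiL S = (\<integral>\<^sup>+x. indicator S x \<partial>PiL)" using Sm by simp
    also have "\<dots> = (\<integral>\<^sup>+y. (\<integral>\<^sup>+x. indicator S (x(n := y)) \<partial>PL) \<partial>lborel)"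
      unfolding PiL_def PL_def ins[symmetric]
      by (rule PL.product_nn_integral_insert_rev) (use indm in \<open>simp_all add: PiL_def ins\<close>)
    also have "\<dots> = (\<integral>\<^sup>+y. 0 \<partial>(lborel :: real measure))"
    proof (rule nn_integral_cong)
      fix y :: real
      have "(\<integral>\<^sup>+x. indicator S (x(n := y)) \<partial>PL) = (\<integral>\<^sup>+x. indicator N' (restrict (\<lambda>l. x l + (c l - y)) {..<n}) \<partial>PL)"
      proof (rule nn_integral_cong)
        fix x assume x: "x \<in> space PL"
        have xs: "x(n := y) \<in> space PiL" using x unfolding PL_def PiL_def ins[symmetric]
          by (auto simp: space_PiM PiE_def extensional_def)
        have "(\<lambda>l\<in>{..<n}. (x(n := y)) l - (x(n := y)) n + c l) = restrict (\<lambda>l. x l + (c l - y)) {..<n}"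
          by (auto simp: fun_eq_iff)
        then show "indicator S (x(n := y)) = (indicator N' (restrict (\<lambda>l. x l + (c l - y)) {..<n}) :: ennreal)"
          using xs unfolding S_def by (simp add: indicator_def)
      qed
      also have "\<dots> = (\<integral>\<^sup>+x. indicator N' x \<partial>PL)"
        unfolding PL_def by (rule nn_integral_PiM_translate) (use N'm' in \<open>simp_all add: PL_def\<close>)
      also have "\<dots> = 0" using N'm' N'0 by (simp add: PL_def n_def)
      finally show "(\<integral>\<^sup>+x. indicator S (x(n := y)) \<partial>PL) = 0" .
    qed
    finally show ?thesis by simp
  qed
  have QS: "emeasure (distr \<Omega> (PiM {..<L} (\<lambda>_. borel)) (\<lambda>\<omega>. \<lambda>l\<in>{..<L}. W l \<omega>)) S = 0"
    unfolding Q Qd using absolutely_continuousI_density[OF Fpm] Sm S0 unfolding absolutely_continuous_def by auto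
  have Wjm: "(\<lambda>\<omega>. \<lambda>l\<in>{..<L}. W l \<omega>) \<in> measurable \<Omega> (PiM {..<L} (\<lambda>_. borel))"
    using Wm by (intro measurable_restrict) auto
  have Sb: "S \<in> sets (PiM {..<L} (\<lambda>_. borel))" using Sm unfolding PiL_def by (simp cong: sets_PiM_cong)
  have "emeasure \<Omega> {\<omega>\<in>space \<Omega>. (\<lambda>l\<in>{..<L-1}. ln (V l \<omega>) - ln (V (L-1) \<omega>) + c l) \<in> N'}
      \<le> emeasure \<Omega> ((\<lambda>\<omega>. \<lambda>l\<in>{..<L}. W l \<omega>) -` S \<inter> space \<Omega>)"
  proof (rule emeasure_mono)
    show "(\<lambda>\<omega>. \<lambda>l\<in>{..<L}. W l \<omega>) -` S \<inter> space \<Omega> \<in> sets \<Omega>" using measurable_sets[OF Wjm Sb] .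
    show "{\<omega>\<in>space \<Omega>. (\<lambda>l\<in>{..<L-1}. ln (V l \<omega>) - ln (V (L-1) \<omega>) + c l) \<in> N'} \<subseteq> (\<lambda>\<omega>. \<lambda>l\<in>{..<L}. W l \<omega>) -` S \<inter> space \<Omega>"
    proof (rule subsetI)
      fix \<omega> assume a: "\<omega> \<in> {\<omega>\<in>space \<Omega>. (\<lambda>l\<in>{..<L-1}. ln (V l \<omega>) - ln (V (L-1) \<omega>) + c l) \<in> N'}"
      then have \<omega>: "\<omega> \<in> space \<Omega>" and inN: "(\<lambda>l\<in>{..<L-1}. ln (V l \<omega>) - ln (V (L-1) \<omega>) + c l) \<in> N'" by auto
      have sp: "(\<lambda>l\<in>{..<L}. W l \<omega>) \<in> space PiL" unfolding PiL_def by (simp add: space_PiM)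
      have nL: "n < L" using L2 by (simp add: n_def)
      have "(\<lambda>l\<in>{..<n}. (\<lambda>l\<in>{..<L}. W l \<omega>) l - (\<lambda>l\<in>{..<L}. W l \<omega>) n + c l) = (\<lambda>l\<in>{..<L-1}. ln (V l \<omega>) - ln (V (L-1) \<omega>) + c l)"
        using nL by (auto simp: fun_eq_iff W_def n_def)
      then have "(\<lambda>l\<in>{..<L}. W l \<omega>) \<in> S" unfolding S_def using sp inN by simp
      then show "\<omega> \<in> (\<lambda>\<omega>. \<lambda>l\<in>{..<L}. W l \<omega>) -` S \<inter> space \<Omega>" using \<omega> by simp
    qed
  qed
  also have "\<dots> = 0" using QS Sb by (subst emeasure_distr[OF Wjm Sb, symmetric])
  finally show ?thesis by simp
qed




lemma gvec_pos:
  fixes lam :: "nat \<Rightarrow> real" and \<rho> :: real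
  assumes r0: "0 \<le> \<rho>" and r1: "\<rho> < 1" and ll: "lam l > lam (L - 1)" and ln0: "lam (L - 1) \<ge> 0"
  shows "gvec lam L \<rho> l > 0"
proof -
  define a where "a = lam l - 1"
  define b where "b = lam (L - 1) - 1"
  have e1: "1 + \<rho> * a = (1 - \<rho>) + \<rho> * lam l" by (simp add: a_def algebra_simps)
  have e2: "1 + \<rho> * b = (1 - \<rho>) + \<rho> * lam (L - 1)" by (simp add: b_def algebra_simps)
  have "\<rho> * lam l \<ge> 0" using r0 ll ln0 by simp
  then have pa: "1 + \<rho> * a > 0" using e1 r1 by linarith
  have "\<rho> * lam (L - 1) \<ge> 0" using r0 ln0 by simp
  then have pb: "1 + \<rho> * b > 0" using e2 r1 by linarith
  have fl: "fl lam L l = (\<lambda>t. (1 + t * a) / (1 + t * b))"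
    unfolding fl_def a_def b_def by (auto simp: fun_eq_iff)
  define q where "q = (\<lambda>t. (1 + t * a) / (1 + t * b))"
  have dnum: "((\<lambda>t. 1 + t * a) has_real_derivative a) (at \<rho>)"
    using DERIV_add[OF DERIV_const[of 1] DERIV_cmult_right[OF DERIV_ident, of a]] by simp
  have dden: "((\<lambda>t. 1 + t * b) has_real_derivative b) (at \<rho>)"
    using DERIV_add[OF DERIV_const[of 1] DERIV_cmult_right[OF DERIV_ident, of b]] by simp
  define q' where "q' = (a * (1 + \<rho> * b) - (1 + \<rho> * a) * b) / ((1 + \<rho> * b) * (1 + \<rho> * b))"
  have dq: "(q has_real_derivative q') (at \<rho>)"
    unfolding q_def q'_def using DERIV_divide[OF dnum dden] pb by simp
  have qpos: "q \<rho> > 0" unfolding q_def using pa pb by simp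
  have dl: "((\<lambda>t. ln (q t)) has_real_derivative (1 / q \<rho> * q')) (at \<rho>)"
    using DERIV_chain2[OF DERIV_ln_divide[OF qpos] dq] .
  have "gvec lam L \<rho> l = 1 / q \<rho> * q'"
    unfolding gvec_def fl q_def[symmetric] using dl by (rule DERIV_imp_deriv)
  moreover have "q' > 0"
  proof -
    have "a * (1 + \<rho> * b) - (1 + \<rho> * a) * b = a - b" by (simp add: algebra_simps)
    moreover have "a - b > 0" using ll unfolding a_def b_def by simp
    ultimately show ?thesis unfolding q'_def using pb by simp
  qed
  ultimately show ?thesis using qpos by simp
qed




lemma ratio_cancel:
  fixes A B v w r s :: real
  assumes "A \<noteq> 0" "B \<noteq> 0"
  shows "((A * v) / r) / ((B * w) / s) / (A / B) = (v / r) / (w / s)"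
  using assms by (cases "w = 0"; cases "r = 0"; cases "s = 0"; simp add: field_simps)

theorem theorem1:
  fixes \<Omega> :: "'a measure"
    and L :: nat and lam :: "nat \<Rightarrow> real" and r :: "nat \<Rightarrow> nat"
    and V :: "nat \<Rightarrow> 'a \<Rightarrow> real"
    and sa se :: real
    and Mr :: "nat \<Rightarrow> nat \<Rightarrow> real"
    and K :: "(nat \<Rightarrow> real) \<Rightarrow> real measure"
    and \<alpha> :: real and C :: "(nat \<Rightarrow> real) set"
  defines "\<rho> \<equiv> herit sa se"
    and "U \<equiv> \<lambda>\<omega> l. (V l \<omega> / real (r l)) / (V (L - 1) \<omega> / real (r (L - 1)))"
    and "X \<equiv> \<lambda>\<omega> l. (((lam l * sa + se) * V l \<omega>) / real (r l))
                    / (((lam (L - 1) * sa + se) * V (L - 1) \<omega>) / real (r (L - 1)))"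
  assumes "prob_space \<Omega>"
    and "L \<ge> 3"
    and "\<forall>i j. i < j \<and> j < L \<longrightarrow> lam j < lam i"
    and "lam (L - 1) \<ge> 0"
    and "\<forall>l<L. r l \<ge> 1"
    and "prob_space.indep_vars \<Omega> (\<lambda>_. borel) V {..<L}"
    and "\<forall>l<L. distributed \<Omega> lborel (V l) (\<lambda>x. ennreal (chi2_density (r l) x))"
    and "sa \<ge> 0" and "se > 0"
    and "rows_basis_orth_compl L Mr (gvec lam L \<rho>)"
    and "cond_distr_kernel \<Omega> (\<lambda>\<omega>. tau L (U \<omega>)) (\<lambda>\<omega>. eta L Mr (U \<omega>)) (Hspace L) K"
    and "0 < \<alpha>" and "\<alpha> < 1"
    and "C \<in> sets (Hspace L)"
  shows "measure \<Omega> {\<omega>\<in>space \<Omega>. plaus lam L Mr K \<rho> (X \<omega>) \<le> \<alpha> \<and> Hstat lam L Mr \<rho> (X \<omega>) \<in> C}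
           = \<alpha> * measure \<Omega> {\<omega>\<in>space \<Omega>. Hstat lam L Mr \<rho> (X \<omega>) \<in> C}"
proof -
  interpret P: prob_space \<Omega> by fact
  have L3: "L \<ge> 3" by fact
  have dist: "\<forall>l<L. distributed \<Omega> lborel (V l) (\<lambda>x. ennreal (chi2_density (r l) x))" by fact
  have lamdec0: "\<forall>i j. i < j \<and> j < L \<longrightarrow> lam j < lam i" by fact
  have lamL: "lam (L - 1) \<ge> 0" by fact
  have rpos: "\<forall>l<L. r l \<ge> 1" by fact
  have ind: "prob_space.indep_vars \<Omega> (\<lambda>_. borel) V {..<L}" by fact
  have rows: "rows_basis_orth_compl L Mr (gvec lam L \<rho>)" by fact
  have ker: "cond_distr_kernel \<Omega> (\<lambda>\<omega>. tau L (U \<omega>)) (\<lambda>\<omega>. eta L Mr (U \<omega>)) (Hspace L) K" by fact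
  have a0: "0 < \<alpha>" and a1: "\<alpha> < 1" by fact+
  have Cm: "C \<in> sets (Hspace L)" by fact
  have Vm[measurable]: "\<And>l. l < L \<Longrightarrow> V l \<in> borel_measurable \<Omega>"
    using dist unfolding distributed_def by auto
  have sepos: "se > 0" and sanon: "sa \<ge> 0" by fact+
  have r0: "0 \<le> \<rho>" and r1: "\<rho> < 1" unfolding \<rho>_def herit_def using sepos sanon by (auto simp: divide_simps)
  have lamdec: "\<And>l. l < L - 1 \<Longrightarrow> lam l > lam (L - 1)" using lamdec0 by auto
  have lamnn: "\<And>l. l < L \<Longrightarrow> lam l \<ge> 0"
  proof -
    fix l assume l: "l < L"
    show "lam l \<ge> 0"
    proof (cases "l = L - 1")
      case True then show ?thesis using lamL by simp
    next
      case False then have "l < L - 1" using l by simp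
      then show ?thesis using lamdec[of l] lamL by simp
    qed
  qed
  have gpos: "\<And>l. l < L - 1 \<Longrightarrow> gvec lam L \<rho> l > 0"
    using gvec_pos[where lam=lam and L=L and \<rho>=\<rho>, OF r0 r1 _ lamL] lamdec by blast
  define a where "a = (\<lambda>l. lam l * sa + se)"
  have apos: "\<And>l. l < L \<Longrightarrow> a l > 0" unfolding a_def using lamnn sanon sepos
    by (metis add_nonneg_pos mult_nonneg_nonneg)
  have fl_eq: "fl lam L l \<rho> = a l / a (L - 1)" for l
  proof -
    have e: "1 + \<rho> * (x - 1) = (x * sa + se) / (sa + se)" for x
      unfolding \<rho>_def herit_def using sepos sanon by (simp add: field_simps)
    have q: "sa + se \<noteq> 0" using sepos sanon by simp
    have g: "(p / (sa + se)) / (s / (sa + se)) = p / s" for p s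
      using q by (simp add: divide_divide_eq_right)
    show ?thesis unfolding fl_def a_def e g by simp
  qed
  have flpos: "\<And>l. l < L \<Longrightarrow> fl lam L l \<rho> > 0" unfolding fl_eq using apos L3 by simp
  have XU: "X \<omega> l / fl lam L l \<rho> = U \<omega> l" if l: "l < L" for \<omega> l
  proof -
    have "a l \<noteq> 0" "a (L - 1) \<noteq> 0" using apos l L3 by (auto simp: less_imp_neq[symmetric])
    then show ?thesis unfolding X_def U_def fl_eq unfolding a_def by (rule ratio_cancel)
  qed
  have HZ: "Hstat lam L Mr \<rho> (X \<omega>) = eta L Mr (U \<omega>)" for \<omega>
    unfolding Hstat_def eta_def by (rule restrict_ext) (rule sum.cong, simp_all add: XU)
  have Upos: "U \<omega> l > 0" if pos: "\<forall>l<L. V l \<omega> > 0" and l: "l < L" for \<omega> l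
  proof -
    have "V l \<omega> > 0" "V (L - 1) \<omega> > 0" using pos l L3 by auto
    moreover have "real (r l) > 0" "real (r (L - 1)) > 0" using rpos l L3 by (auto simp: Suc_le_eq)
    ultimately show ?thesis unfolding U_def by simp
  qed
  have TY: "Tstat L (X \<omega>) - phi lam L \<rho> = tau L (U \<omega>)" if pos: "\<forall>l<L. V l \<omega> > 0" for \<omega>
  proof -
    have "ln (X \<omega> l) = ln (fl lam L l \<rho>) + ln (U \<omega> l)" if l: "l < L - 1" for l
    proof -
      have l': "l < L" using l by simp
      have "X \<omega> l = fl lam L l \<rho> * U \<omega> l" using XU[OF l', of \<omega>] flpos[OF l'] by (simp add: field_simps)
      then show ?thesis using flpos[OF l'] Upos[OF pos l'] by (simp add: ln_mult)
    qed
    then show ?thesis unfolding Tstat_def phi_def tau_def by (simp add: sum.distrib)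
  qed
  define Y where "Y = (\<lambda>\<omega>. tau L (U \<omega>))"
  define Z where "Z = (\<lambda>\<omega>. eta L Mr (U \<omega>))"
  have Um: "\<And>l. l < L \<Longrightarrow> (\<lambda>\<omega>. U \<omega> l) \<in> borel_measurable \<Omega>"
    unfolding U_def using L3 by measurable
  have Ym[measurable]: "Y \<in> borel_measurable \<Omega>" unfolding Y_def tau_def
    using Um by (intro borel_measurable_sum borel_measurable_ln) auto
  have Zm[measurable]: "Z \<in> measurable \<Omega> (Hspace L)" unfolding Z_def eta_def Hspace_def
    using Um by (intro measurable_restrict borel_measurable_sum borel_measurable_times borel_measurable_const borel_measurable_ln) auto
  have posAE: "AE \<omega> in \<Omega>. \<forall>l<L. V l \<omega> > 0"
  proof -
    have "AE \<omega> in \<Omega>. \<forall>l\<in>{..<L}. V l \<omega> > 0"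
    proof (rule AE_finite_allI)
      fix l assume "l \<in> {..<L}"
      then have l: "l < L" by simp
      have e0: "emeasure \<Omega> {\<omega>\<in>space \<Omega>. V l \<omega> \<le> 0} = 0"
        using chi2_pos_as[OF assms(4)] dist l by blast
      have "{\<omega>\<in>space \<Omega>. V l \<omega> \<le> 0} \<in> null_sets \<Omega>" using e0 Vm[OF l] by auto
      then show "AE \<omega> in \<Omega>. V l \<omega> > 0" by (rule AE_I') auto
    qed simp
    then show ?thesis by eventually_elim auto
  qed
  have core: "emeasure \<Omega> {\<omega>\<in>space \<Omega>. (Z \<omega>, Y \<omega>) \<in> A} = 0"
    if A: "A \<in> sets (Hspace L \<Otimes>\<^sub>M borel)" and cntA: "\<forall>h. countable {v. (h, v) \<in> A}" for A
  proof -
    define g where "g = gvec lam L \<rho>"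
    define d where "d = (\<lambda>l. g l / g 0)"
    have g0: "g 0 > 0" unfolding g_def using gpos L3 by simp
    have Md: "\<forall>i<L - 2. (\<Sum>l<L - 1. Mr i l * d l) = 0"
    proof (intro allI impI)
      fix i assume i: "i < L - 2"
      have "(\<Sum>l<L - 1. Mr i l * g l) = 0" using rows i unfolding rows_basis_orth_compl_def g_def by blast
      then show "(\<Sum>l<L - 1. Mr i l * d l) = 0" unfolding d_def
        by (simp add: sum_divide_distrib[symmetric] times_divide_eq_right)
    qed
    have Dsum: "(\<Sum>l<L - 1. d l) \<noteq> 0"
    proof -
      have "0 \<in> {..<L-1}" using L3 by simp
      then have ne: "{..<L-1} \<noteq> {}" by blast
      have "(\<Sum>l<L - 1. d l) > 0" unfolding d_def
        by (rule sum_pos[OF _ ne]) (use L3 gpos g0 in \<open>auto simp: g_def\<close>)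
      then show ?thesis by simp
    qed
    have d0: "d 0 = 1" unfolding d_def using g0 by simp
    define N' where "N' = {x \<in> space (PiM {..<L-1} (\<lambda>_. lborel)).
        (restrict (\<lambda>i. \<Sum>l<L - 1. Mr i l * x l) {..<L - 2}, \<Sum>l<L - 1. x l) \<in> A}"
    have A': "A \<in> sets (PiM {..<L - 2} (\<lambda>_. borel) \<Otimes>\<^sub>M borel)" using A by (simp add: Hspace_def)
    have N'0: "emeasure (PiM {..<L-1} (\<lambda>_. lborel)) N' = 0"
      unfolding N'_def using shear_null[of "L - 1" d "L - 2" Mr A] L3 d0 Md Dsum A' cntA by simp
    have Em: "(\<lambda>x. (restrict (\<lambda>i. \<Sum>l<L - 1. Mr i l * x l) {..<L - 2}, \<Sum>l<L - 1. x l))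
        \<in> measurable (PiM {..<L-1} (\<lambda>_. lborel)) (PiM {..<L - 2} (\<lambda>_. borel) \<Otimes>\<^sub>M borel)"
      by measurable
    have N'm: "N' \<in> sets (PiM {..<L-1} (\<lambda>_. lborel))"
      unfolding N'_def using measurable_sets[OF Em A'] by (simp add: vimage_def Int_def conj_commute)
    define c where "c = (\<lambda>l. ln (real (r (L - 1))) - ln (real (r l)))"
    have B0: "emeasure \<Omega> {\<omega>\<in>space \<Omega>. (\<lambda>l\<in>{..<L-1}. ln (V l \<omega>) - ln (V (L-1) \<omega>) + c l) \<in> N'} = 0"
      using lu_null[OF assms(4) _ ind dist N'm N'0, of c] L3 by simp
    have Bm: "{\<omega>\<in>space \<Omega>. (\<lambda>l\<in>{..<L-1}. ln (V l \<omega>) - ln (V (L-1) \<omega>) + c l) \<in> N'} \<in> sets \<Omega>"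
    proof -
      have "(\<lambda>\<omega>. \<lambda>l\<in>{..<L-1}. ln (V l \<omega>) - ln (V (L-1) \<omega>) + c l) \<in> measurable \<Omega> (PiM {..<L-1} (\<lambda>_. lborel))"
        using L3 by (intro measurable_restrict) auto
      from measurable_sets[OF this N'm] show ?thesis by (simp add: vimage_def Int_def conj_commute)
    qed
    have "emeasure \<Omega> {\<omega>\<in>space \<Omega>. (Z \<omega>, Y \<omega>) \<in> A}
        \<le> emeasure \<Omega> {\<omega>\<in>space \<Omega>. (\<lambda>l\<in>{..<L-1}. ln (V l \<omega>) - ln (V (L-1) \<omega>) + c l) \<in> N'}"
    proof (rule emeasure_mono_AE[OF _ Bm])
      show "AE \<omega> in \<Omega>. \<omega> \<in> {\<omega>\<in>space \<Omega>. (Z \<omega>, Y \<omega>) \<in> A} \<longrightarrow>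
          \<omega> \<in> {\<omega>\<in>space \<Omega>. (\<lambda>l\<in>{..<L-1}. ln (V l \<omega>) - ln (V (L-1) \<omega>) + c l) \<in> N'}"
        using posAE
      proof eventually_elim
        case (elim \<omega>)
        show ?case
        proof
          assume "\<omega> \<in> {\<omega>\<in>space \<Omega>. (Z \<omega>, Y \<omega>) \<in> A}"
          then have \<omega>: "\<omega> \<in> space \<Omega>" and ZYA: "(Z \<omega>, Y \<omega>) \<in> A" by auto
          define x where "x = (\<lambda>l\<in>{..<L-1}. ln (V l \<omega>) - ln (V (L-1) \<omega>) + c l)"
          have xl: "x l = ln (U \<omega> l)" if l: "l < L - 1" for l
          proof -
            have l': "l < L" "L - 1 < L" using l L3 by auto
            have pos: "V l \<omega> > 0" "V (L-1) \<omega> > 0" "real (r l) > 0" "real (r (L-1)) > 0"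
              using elim l' rpos by (auto simp: Suc_le_eq)
            have q1: "V l \<omega> / real (r l) > 0" and q2: "V (L - 1) \<omega> / real (r (L - 1)) > 0" using pos by auto
            have "ln (U \<omega> l) = ln (V l \<omega> / real (r l)) - ln (V (L - 1) \<omega> / real (r (L - 1)))"
              unfolding U_def by (rule ln_divide_pos[OF q1 q2])
            also have "\<dots> = (ln (V l \<omega>) - ln (real (r l))) - (ln (V (L - 1) \<omega>) - ln (real (r (L - 1))))"
              using ln_divide_pos[OF pos(1) pos(3)] ln_divide_pos[OF pos(2) pos(4)] by simp
            also have "\<dots> = x l" unfolding x_def c_def using l by simp
            finally show ?thesis by simp
          qed
          have "Z \<omega> = restrict (\<lambda>i. \<Sum>l<L - 1. Mr i l * x l) {..<L - 2}"
            unfolding Z_def eta_def by (rule restrict_ext) (simp add: xl)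
          moreover have "Y \<omega> = (\<Sum>l<L - 1. x l)"
            unfolding Y_def tau_def by (simp add: xl)
          moreover have "x \<in> space (PiM {..<L-1} (\<lambda>_. lborel))" unfolding x_def by (simp add: space_PiM)
          ultimately have "x \<in> N'" unfolding N'_def using ZYA by simp
          then show "\<omega> \<in> {\<omega>\<in>space \<Omega>. (\<lambda>l\<in>{..<L-1}. ln (V l \<omega>) - ln (V (L-1) \<omega>) + c l) \<in> N'}"
            using \<omega> unfolding x_def by simp
        qed
      qed
    qed
    then show ?thesis using B0 by simp
  qed
  let ?H = "Hspace L"
  have kerYZ: "cond_distr_kernel \<Omega> Y Z ?H K" using ker unfolding Y_def Z_def .
  have Km[measurable]: "K \<in> measurable ?H (subprob_algebra borel)" by (rule kernel_measurable[OF kerYZ])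
  have Kp: "\<And>z. z \<in> space ?H \<Longrightarrow> prob_space (K z)" and Ks: "\<And>z. z \<in> space ?H \<Longrightarrow> sets (K z) = sets borel"
    using kerYZ unfolding cond_distr_kernel_def by auto
  have kmm[measurable]: "(\<lambda>h. kmean K h) \<in> borel_measurable ?H"
    unfolding kmean_def
    using measurable_compose[OF Km integral_measurable_subprob_algebra[of "\<lambda>v::real. v" borel]] by simp
  have KFm: "(\<lambda>p. K (fst p)) \<in> measurable (?H \<Otimes>\<^sub>M borel) (subprob_algebra borel)"
    by (rule measurable_compose[OF measurable_fst Km])
  have kFm: "(\<lambda>p. kF K (fst p) (snd p)) \<in> borel_measurable (?H \<Otimes>\<^sub>M borel)"
    unfolding kF_def
  proof (rule measure_measurable_subprob_algebra2[OF _ KFm])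
    have "Measurable.pred ((?H \<Otimes>\<^sub>M borel) \<Otimes>\<^sub>M borel) (\<lambda>x. \<bar>snd x - kmean K (fst (fst x))\<bar> \<le> snd (fst x))"
      by measurable
    then have "{x \<in> space ((?H \<Otimes>\<^sub>M borel) \<Otimes>\<^sub>M borel). \<bar>snd x - kmean K (fst (fst x))\<bar> \<le> snd (fst x)} \<in> sets ((?H \<Otimes>\<^sub>M borel) \<Otimes>\<^sub>M borel)"
      by measurable
    moreover have "(SIGMA x:space (?H \<Otimes>\<^sub>M borel). {v. \<bar>v - kmean K (fst x)\<bar> \<le> snd x})
        = {x \<in> space ((?H \<Otimes>\<^sub>M borel) \<Otimes>\<^sub>M borel). \<bar>snd x - kmean K (fst (fst x))\<bar> \<le> snd (fst x)}"
      by (auto simp: space_pair_measure)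
    ultimately show "(SIGMA x:space (?H \<Otimes>\<^sub>M borel). {v. \<bar>v - kmean K (fst x)\<bar> \<le> snd x}) \<in> sets ((?H \<Otimes>\<^sub>M borel) \<Otimes>\<^sub>M borel)"
      by simp
  qed
  have atm: "(\<lambda>p. measure (K (fst p)) {snd p}) \<in> borel_measurable (?H \<Otimes>\<^sub>M borel)"
  proof (rule measure_measurable_subprob_algebra2[OF _ KFm])
    have "{x \<in> space ((?H \<Otimes>\<^sub>M borel) \<Otimes>\<^sub>M (borel :: real measure)). snd x \<le> snd (fst x) \<and> snd (fst x) \<le> snd x} \<in> sets ((?H \<Otimes>\<^sub>M borel) \<Otimes>\<^sub>M (borel :: real measure))"
      by measurable
    moreover have "{x \<in> space ((?H \<Otimes>\<^sub>M borel) \<Otimes>\<^sub>M (borel :: real measure)). snd x \<le> snd (fst x) \<and> snd (fst x) \<le> snd x} = {x \<in> space ((?H \<Otimes>\<^sub>M borel) \<Otimes>\<^sub>M (borel :: real measure)). snd x = snd (fst x)}"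
      by auto
    ultimately have "{x \<in> space ((?H \<Otimes>\<^sub>M borel) \<Otimes>\<^sub>M (borel :: real measure)). snd x = snd (fst x)} \<in> sets ((?H \<Otimes>\<^sub>M borel) \<Otimes>\<^sub>M (borel :: real measure))"
      by simp
    moreover have "(SIGMA x:space (?H \<Otimes>\<^sub>M borel). {snd x})
        = {x \<in> space ((?H \<Otimes>\<^sub>M borel) \<Otimes>\<^sub>M (borel :: real measure)). snd x = snd (fst x)}"
      by (auto simp: space_pair_measure)
    ultimately show "(SIGMA x:space (?H \<Otimes>\<^sub>M borel). {snd x}) \<in> sets ((?H \<Otimes>\<^sub>M borel) \<Otimes>\<^sub>M (borel :: real measure))"
      by simp
  qed
  have spD: "space (distr \<Omega> ?H Z) = space ?H" by simp
  have atomAE: "AE z in distr \<Omega> ?H Z. \<forall>v. measure (K z) {v} = 0"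
  proof -
    define A0 where "A0 = {p \<in> space (?H \<Otimes>\<^sub>M borel). measure (K (fst p)) {snd p} \<noteq> 0}"
    have A0m: "A0 \<in> sets (?H \<Otimes>\<^sub>M borel)" unfolding A0_def using atm by measurable
    have cnt: "\<forall>h. countable {v. (h, v) \<in> A0}"
    proof
      fix h
      show "countable {v. (h, v) \<in> A0}"
      proof (cases "h \<in> space ?H")
        case True
        interpret F: prob_space "K h" using Kp[OF True] .
        have "{v. (h, v) \<in> A0} \<subseteq> {x. measure (K h) {x} \<noteq> 0}" unfolding A0_def by auto
        then show ?thesis using F.countable_support countable_subset by blast
      next
        case False
        then have "{v. (h, v) \<in> A0} = {}" unfolding A0_def by (auto simp: space_pair_measure)
        then show ?thesis by simp
      qed
    qed
    have e0: "emeasure \<Omega> {\<omega>\<in>space \<Omega>. (Z \<omega>, Y \<omega>) \<in> A0} = 0" by (rule core[OF A0m cnt])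
    have "emeasure \<Omega> {\<omega>\<in>space \<Omega>. (Z \<omega>, Y \<omega>) \<in> A0} = (\<integral>\<^sup>+z. emeasure (K z) (Pair z -` A0) \<partial>distr \<Omega> ?H Z)"
      by (rule disint[OF assms(4) kerYZ Ym Zm A0m])
    with e0 have i0: "(\<integral>\<^sup>+z. emeasure (K z) (Pair z -` A0) \<partial>distr \<Omega> ?H Z) = 0" by simp
    have fm: "(\<lambda>z. emeasure (K z) (Pair z -` A0)) \<in> borel_measurable ?H"
    proof (rule emeasure_measurable_subprob_algebra2[OF _ Km])
      have "(SIGMA x:space ?H. Pair x -` A0) = A0" unfolding A0_def by (auto simp: space_pair_measure)
      then show "(SIGMA x:space ?H. Pair x -` A0) \<in> sets (?H \<Otimes>\<^sub>M borel)" using A0m by simp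
    qed
    have "AE z in distr \<Omega> ?H Z. emeasure (K z) (Pair z -` A0) = 0"
      using i0 fm by (subst (asm) nn_integral_0_iff_AE) auto
    then show ?thesis
    proof (rule AE_mp[OF AE_conj_iff[THEN iffD2, OF conjI[OF _ AE_space]]], intro AE_I2 impI allI)
      fix z v assume z: "emeasure (K z) (Pair z -` A0) = 0 \<and> z \<in> space (distr \<Omega> ?H Z)"
      then have zH: "z \<in> space ?H" by simp
      interpret F: prob_space "K z" using Kp[OF zH] .
      show "measure (K z) {v} = 0"
      proof (rule ccontr)
        assume ne: "measure (K z) {v} \<noteq> 0"
        then have "(z, v) \<in> A0" unfolding A0_def using zH by (simp add: space_pair_measure)
        then have "{v} \<subseteq> Pair z -` A0" by auto
        moreover have "Pair z -` A0 \<in> sets (K z)" using sets_Pair1[OF A0m] Ks[OF zH] by simp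
        ultimately have "emeasure (K z) {v} \<le> emeasure (K z) (Pair z -` A0)" by (rule emeasure_mono)
        then have "emeasure (K z) {v} = 0" using z by simp
        then show False using ne by (simp add: measure_def)
      qed
    qed
  qed
  define SS where "SS = {p \<in> space (?H \<Otimes>\<^sub>M borel). fst p \<in> C \<and> 1 - kF K (fst p) \<bar>snd p - kmean K (fst p)\<bar> \<le> \<alpha>}"
  have kFc: "(\<lambda>p. kF K (fst p) \<bar>snd p - kmean K (fst p)\<bar>) \<in> borel_measurable (?H \<Otimes>\<^sub>M borel)"
  proof -
    have "(\<lambda>p. (fst p, \<bar>snd p - kmean K (fst p)\<bar>)) \<in> measurable (?H \<Otimes>\<^sub>M borel) (?H \<Otimes>\<^sub>M borel)"
      by measurable
    from measurable_compose[OF this kFm] show ?thesis by simp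
  qed
  have SSm: "SS \<in> sets (?H \<Otimes>\<^sub>M borel)" unfolding SS_def using kFc Cm by measurable
  have plausX: "plaus lam L Mr K \<rho> (X \<omega>) = 1 - kF K (Z \<omega>) \<bar>Tstat L (X \<omega>) - phi lam L \<rho> - kmean K (Z \<omega>)\<bar>" for \<omega>
    unfolding plaus_def Let_def HZ Z_def ..
  have Xm: "\<And>l. l < L \<Longrightarrow> (\<lambda>\<omega>. X \<omega> l) \<in> borel_measurable \<Omega>"
    unfolding X_def using L3 by measurable
  have TXm: "(\<lambda>\<omega>. Tstat L (X \<omega>)) \<in> borel_measurable \<Omega>" unfolding Tstat_def
    using Xm by (intro borel_measurable_sum borel_measurable_ln) auto
  have lhsm: "{\<omega>\<in>space \<Omega>. plaus lam L Mr K \<rho> (X \<omega>) \<le> \<alpha> \<and> Hstat lam L Mr \<rho> (X \<omega>) \<in> C} \<in> sets \<Omega>"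
  proof -
    have m1: "(\<lambda>\<omega>. (Z \<omega>, Tstat L (X \<omega>) - phi lam L \<rho>)) \<in> measurable \<Omega> (?H \<Otimes>\<^sub>M borel)"
      using TXm by measurable
    have "{\<omega>\<in>space \<Omega>. (Z \<omega>, Tstat L (X \<omega>) - phi lam L \<rho>) \<in> SS} \<in> sets \<Omega>"
      using measurable_sets[OF m1 SSm] by (simp add: vimage_def Int_def conj_commute)
    moreover have "{\<omega>\<in>space \<Omega>. (Z \<omega>, Tstat L (X \<omega>) - phi lam L \<rho>) \<in> SS}
        = {\<omega>\<in>space \<Omega>. plaus lam L Mr K \<rho> (X \<omega>) \<le> \<alpha> \<and> Hstat lam L Mr \<rho> (X \<omega>) \<in> C}"
      using measurable_space[OF Zm] unfolding SS_def plausX HZ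
      by (auto simp: space_pair_measure Z_def)
    ultimately show ?thesis by simp
  qed
  have ZYm: "{\<omega>\<in>space \<Omega>. (Z \<omega>, Y \<omega>) \<in> SS} \<in> sets \<Omega>"
    using measurable_sets[OF measurable_Pair[OF Zm Ym] SSm] by (simp add: vimage_def Int_def conj_commute)
  have e1: "emeasure \<Omega> {\<omega>\<in>space \<Omega>. plaus lam L Mr K \<rho> (X \<omega>) \<le> \<alpha> \<and> Hstat lam L Mr \<rho> (X \<omega>) \<in> C}
      = emeasure \<Omega> {\<omega>\<in>space \<Omega>. (Z \<omega>, Y \<omega>) \<in> SS}"
  proof (rule emeasure_eq_AE[OF _ lhsm ZYm])
    show "AE \<omega> in \<Omega>. \<omega> \<in> {\<omega>\<in>space \<Omega>. plaus lam L Mr K \<rho> (X \<omega>) \<le> \<alpha> \<and> Hstat lam L Mr \<rho> (X \<omega>) \<in> C} \<longleftrightarrow>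
        \<omega> \<in> {\<omega>\<in>space \<Omega>. (Z \<omega>, Y \<omega>) \<in> SS}"
      using posAE
    proof eventually_elim
      case (elim \<omega>)
      have "Tstat L (X \<omega>) - phi lam L \<rho> = Y \<omega>" unfolding Y_def by (rule TY[OF elim])
      then show ?case
        using measurable_space[OF Zm] unfolding SS_def plausX HZ
        by (auto simp: space_pair_measure Z_def)
    qed
  qed
  have e2: "emeasure \<Omega> {\<omega>\<in>space \<Omega>. (Z \<omega>, Y \<omega>) \<in> SS} = (\<integral>\<^sup>+z. emeasure (K z) (Pair z -` SS) \<partial>distr \<Omega> ?H Z)"
    by (rule disint[OF assms(4) kerYZ Ym Zm SSm])
  have e3: "(\<integral>\<^sup>+z. emeasure (K z) (Pair z -` SS) \<partial>distr \<Omega> ?H Z) = (\<integral>\<^sup>+z. ennreal \<alpha> * indicator C z \<partial>distr \<Omega> ?H Z)"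
  proof (rule nn_integral_cong_AE)
    show "AE z in distr \<Omega> ?H Z. emeasure (K z) (Pair z -` SS) = ennreal \<alpha> * indicator C z"
      using atomAE AE_space
    proof eventually_elim
      case (elim z)
      then have zH: "z \<in> space ?H" and at: "\<And>v. measure (K z) {v} = 0" by auto
      interpret F: prob_space "K z" using Kp[OF zH] .
      have spK: "space (K z) = UNIV" using sets_eq_imp_space_eq[OF Ks[OF zH]] by simp
      show ?case
      proof (cases "z \<in> C")
        case True
        have eqs: "Pair z -` SS = {v. 1 - measure (K z) {w. \<bar>w - kmean K z\<bar> \<le> \<bar>v - kmean K z\<bar>} \<le> \<alpha>}"
          unfolding SS_def kF_def using zH True by (auto simp: space_pair_measure)
        have "measure (K z) (Pair z -` SS) = \<alpha>"
          unfolding eqs by (rule pit[OF Kp[OF zH] Ks[OF zH] at a0 a1])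
        then have "emeasure (K z) (Pair z -` SS) = ennreal \<alpha>"
          using F.emeasure_eq_measure by simp
        then show ?thesis using True by simp
      next
        case False
        have "Pair z -` SS = {}" unfolding SS_def using False by auto
        then show ?thesis using False by simp
      qed
    qed
  qed
  have e4: "(\<integral>\<^sup>+z. ennreal \<alpha> * indicator C z \<partial>distr \<Omega> ?H Z) = ennreal \<alpha> * emeasure \<Omega> {\<omega>\<in>space \<Omega>. Z \<omega> \<in> C}"
  proof -
    have "(\<integral>\<^sup>+z. ennreal \<alpha> * indicator C z \<partial>distr \<Omega> ?H Z) = ennreal \<alpha> * emeasure (distr \<Omega> ?H Z) C"
      using Cm by (simp add: nn_integral_cmult_indicator)
    also have "emeasure (distr \<Omega> ?H Z) C = emeasure \<Omega> {\<omega>\<in>space \<Omega>. Z \<omega> \<in> C}"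
      using Cm by (subst emeasure_distr[OF Zm Cm]) (auto intro!: arg_cong[where f="emeasure \<Omega>"])
    finally show ?thesis .
  qed
  have rhs: "{\<omega>\<in>space \<Omega>. Hstat lam L Mr \<rho> (X \<omega>) \<in> C} = {\<omega>\<in>space \<Omega>. Z \<omega> \<in> C}"
    unfolding HZ Z_def ..
  have "emeasure \<Omega> {\<omega>\<in>space \<Omega>. plaus lam L Mr K \<rho> (X \<omega>) \<le> \<alpha> \<and> Hstat lam L Mr \<rho> (X \<omega>) \<in> C}
      = ennreal \<alpha> * emeasure \<Omega> {\<omega>\<in>space \<Omega>. Hstat lam L Mr \<rho> (X \<omega>) \<in> C}"
    using e1 e2 e3 e4 rhs by simp
  then show ?thesis
    using a0 by (simp add: measure_def enn2real_mult)
qed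


end
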